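(* Let $E=\mathbb{R}^n$ with the Euclidean norm $\|\cdot\|_2$ and prox-function $d(x)=\frac12\|x\|_2^2$ (so $\psi_0(x)=\frac12\|x-x^0\|_2^2$). Let $f$ be convex and $L$-smooth with a minimizer $x_*$, and set $R=\|x^0-x_*\|_2$. For the iterates of Algorithm AGMsDR and $k\ge1$ define $$\hat f^k=\min_{x:\,\|x-x^0\|_2\le R}\ \frac{1}{A_k}\sum_{i=0}^{k-1}a_{i+1}\big\{f(y^i)+\langle\nabla f(y^i),x-y^i\rangle\big\}.$$ Then $\hat f^k\le f(x_* )$ and $f(x^k)-\hat f^k\le\frac{R^2}{2A_k}$; in particular $f(x^k)-f(x_* )\le f(x^k)-\hat f^k\le\frac{R^2}{2A_k}$.
   Context: A function $f:\mathbb{R}^n\to\mathbb{R}$ is $L$-smooth ($L>0$) if it is continuously differentiable and $\|\nabla f(x)-\nabla f(y)\|_2\le L\|x-y\|_2$ for all $x,y$. For $g\neq0$, $g^{\#}=g/\|g\|_2$. Algorithm AGMsDR (Euclidean case; input $x^0$, and $L$ for Option (a)): set $A_0=0$, $v^0=x^0$, $\psi_0(x)=\frac12\|x-x^0\|_2^2$. For $k=0,1,2,\dots$: 1. Choose $\beta_k\in\arg\min_{\beta\in[0,1]} f(v^k+\beta(x^k-v^k))$ and set $y^k=v^k+\beta_k(x^k-v^k)$. 2. Option (a): $x^{k+1}=y^k-\frac1L\nabla f(y^k)$, and $a_{k+1}>0$ solves $\frac{a_{k+1}^2}{A_k+a_{k+1}}=\frac1L$. Option (b): $h_{k+1}\in\arg\min_{h\ge0}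 f(y^k-h(\nabla f(y^k))^{\#})$, $x^{k+1}=y^k-h_{k+1}(\nabla f(y^k))^{\#}$, and $a_{k+1}$ is the largest solution of $f(y^k)-\frac{a_{k+1}^2}{2(A_k+a_{k+1})}\|\nabla f(y^k)\|_2^2=f(x^{k+1})$. 3. $A_{k+1}=A_k+a_{k+1}$; $\psi_{k+1}(x)=\psi_k(x)+a_{k+1}\{f(y^k)+\langle\nabla f(y^k),x-y^k\rangle\}$; $v^{k+1}=\arg\min_{x}\psi_{k+1}(x)$. All minima are assumed attained and $\nabla f(y^k)\ne0$ for all iterations considered. *)

theory Defs
  imports "HOL-Analysis.Analysis"
begin

text \<open>Gradient is given as a function g with f having derivative (h maps to inner (g x) h).
  Linear model: sum over i<k of a(i+1) (f(y i) + <g(y i), z - y i>).\<close>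

definition lin_model :: "('a::euclidean_space \<Rightarrow> real) \<Rightarrow> ('a \<Rightarrow> 'a) \<Rightarrow> (nat \<Rightarrow> real)
    \<Rightarrow> (nat \<Rightarrow> 'a) \<Rightarrow> nat \<Rightarrow> 'a \<Rightarrow> real" where
  "lin_model f g a y k z = (\<Sum>i<k. a (Suc i) * (f (y i) + g (y i) \<bullet> (z - y i)))"

definition psi :: "'a::euclidean_space \<Rightarrow> ('a \<Rightarrow> real) \<Rightarrow> ('a \<Rightarrow> 'a) \<Rightarrow> (nat \<Rightarrow> real)
    \<Rightarrow> (nat \<Rightarrow> 'a) \<Rightarrow> nat \<Rightarrow> 'a \<Rightarrow> real" where
  "psi x0 f g a y k z = (1/2) * (norm (z - x0))^2 + lin_model f g a y k z"

definition agmsdr_common :: "('a::euclidean_space \<Rightarrow> real) \<Rightarrow> ('a \<Rightarrow> 'a) \<Rightarrow> 'a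
    \<Rightarrow> (nat \<Rightarrow> 'a) \<Rightarrow> (nat \<Rightarrow> 'a) \<Rightarrow> (nat \<Rightarrow> 'a) \<Rightarrow> (nat \<Rightarrow> real) \<Rightarrow> (nat \<Rightarrow> real)
    \<Rightarrow> (nat \<Rightarrow> real) \<Rightarrow> bool" where
  "agmsdr_common f g x0 x v y A a beta \<longleftrightarrow>
     A 0 = 0 \<and> v 0 = x0 \<and> x 0 = x0 \<and>
     (\<forall>k. beta k \<in> {0..1} \<and>
          (\<forall>b\<in>{0..1}. f (v k + beta k *\<^sub>R (x k - v k)) \<le> f (v k + b *\<^sub>R (x k - v k))) \<and>
          y k = v k + beta k *\<^sub>R (x k - v k) \<and>
          A (Suc k) = A k + a (Suc k) \<and>
          (\<forall>z. psi x0 f g a y (Suc k) (v (Suc k)) \<le> psi x0 f g a y (Suc k) z))"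

definition agmsdr_opt_a :: "('a::euclidean_space \<Rightarrow> real) \<Rightarrow> ('a \<Rightarrow> 'a) \<Rightarrow> real \<Rightarrow> 'a
    \<Rightarrow> (nat \<Rightarrow> 'a) \<Rightarrow> (nat \<Rightarrow> 'a) \<Rightarrow> (nat \<Rightarrow> 'a) \<Rightarrow> (nat \<Rightarrow> real) \<Rightarrow> (nat \<Rightarrow> real)
    \<Rightarrow> (nat \<Rightarrow> real) \<Rightarrow> bool" where
  "agmsdr_opt_a f g L x0 x v y A a beta \<longleftrightarrow>
     agmsdr_common f g x0 x v y A a beta \<and>
     (\<forall>k. x (Suc k) = y k - (1 / L) *\<^sub>R g (y k) \<and>
          a (Suc k) > 0 \<and> (a (Suc k))^2 / (A k + a (Suc k)) = 1 / L)"

definition agmsdr_opt_b :: "('a::euclidean_space \<Rightarrow> real) \<Rightarrow> ('a \<Rightarrow> 'a) \<Rightarrow> 'a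
    \<Rightarrow> (nat \<Rightarrow> 'a) \<Rightarrow> (nat \<Rightarrow> 'a) \<Rightarrow> (nat \<Rightarrow> 'a) \<Rightarrow> (nat \<Rightarrow> real) \<Rightarrow> (nat \<Rightarrow> real)
    \<Rightarrow> (nat \<Rightarrow> real) \<Rightarrow> (nat \<Rightarrow> real) \<Rightarrow> bool" where
  "agmsdr_opt_b f g x0 x v y A a beta h \<longleftrightarrow>
     agmsdr_common f g x0 x v y A a beta \<and>
     (\<forall>k. h (Suc k) \<ge> 0 \<and>
          (\<forall>t\<ge>0. f (y k - h (Suc k) *\<^sub>R ((1 / norm (g (y k))) *\<^sub>R g (y k)))
                  \<le> f (y k - t *\<^sub>R ((1 / norm (g (y k))) *\<^sub>R g (y k)))) \<and>
          x (Suc k) = y k - h (Suc k) *\<^sub>R ((1 / norm (g (y k))) *\<^sub>R g (y k)) \<and>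
          f (y k) - (a (Suc k))^2 / (2 * (A k + a (Suc k))) * (norm (g (y k)))^2 = f (x (Suc k)) \<and>
          (\<forall>a'. f (y k) - a'^2 / (2 * (A k + a')) * (norm (g (y k)))^2 = f (x (Suc k))
                 \<longrightarrow> a' \<le> a (Suc k)))"

end

theory Submission
  imports Defs
begin

lemma line_deriv:
  fixes f :: "'a::euclidean_space \<Rightarrow> real"
  assumes grad: "\<And>z. (f has_derivative (\<lambda>d. g z \<bullet> d)) (at z)"
  shows "((\<lambda>t. f (y + t *\<^sub>R d)) has_real_derivative (g (y + t *\<^sub>R d) \<bullet> d)) (at t)"
proof -
  have 1: "((\<lambda>t. y + t *\<^sub>R d) has_derivative (\<lambda>h. h *\<^sub>R d)) (at t)"
    by (auto intro!: derivative_eq_intros)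
  have "((\<lambda>t. f (y + t *\<^sub>R d)) has_derivative (\<lambda>h. g (y + t *\<^sub>R d) \<bullet> (h *\<^sub>R d))) (at t)"
    using has_derivative_compose[OF 1 grad] by (simp add: o_def)
  moreover have "(\<lambda>h. h * (g (y + t *\<^sub>R d) \<bullet> d)) = (*) (g (y + t *\<^sub>R d) \<bullet> d)" by (auto simp: mult.commute)
  ultimately show ?thesis unfolding has_field_derivative_def
    by simp
qed

lemma descent:
  fixes f :: "'a::euclidean_space \<Rightarrow> real"
  assumes grad: "\<And>z. (f has_derivative (\<lambda>d. g z \<bullet> d)) (at z)"
    and lip: "\<And>z w. norm (g z - g w) \<le> L * norm (z - w)"
  shows "f (y + d) \<le> f y + g y \<bullet> d + L / 2 * (norm d)^2"
proof -
  define p where "p t = f (y + t *\<^sub>R d) - t * (g y \<bullet> d) - L / 2 * t^2 * (norm d)^2" for t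
  have "p 1 \<le> p 0"
  proof (rule DERIV_nonpos_imp_nonincreasing[of 0 1])
    show "(0::real) \<le> 1" by simp
  next
    fix t :: real assume t: "0 \<le> t" "t \<le> 1"
    have "(p has_real_derivative (g (y + t *\<^sub>R d) \<bullet> d - g y \<bullet> d - L / 2 * (2 * t) * (norm d)^2)) (at t)"
      unfolding p_def by (auto intro!: derivative_eq_intros line_deriv[OF grad])
    moreover have "g (y + t *\<^sub>R d) \<bullet> d - g y \<bullet> d \<le> L * t * (norm d)^2"
    proof -
      have "g (y + t *\<^sub>R d) \<bullet> d - g y \<bullet> d = (g (y + t *\<^sub>R d) - g y) \<bullet> d" by (simp add: inner_diff_left)
      also have "\<dots> \<le> norm (g (y + t *\<^sub>R d) - g y) * norm d" by (rule norm_cauchy_schwarz)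
      also have "\<dots> \<le> L * norm (t *\<^sub>R d) * norm d" using lip[of "y + t *\<^sub>R d" y] by (simp add: mult_right_mono)
      also have "\<dots> = L * t * (norm d)^2" using t by (simp add: power2_eq_square)
      finally show ?thesis .
    qed
    ultimately show "\<exists>D. (p has_real_derivative D) (at t) \<and> D \<le> 0" by force
  qed
  then show ?thesis unfolding p_def by simp
qed

lemma tangent:
  fixes f :: "'a::euclidean_space \<Rightarrow> real"
  assumes grad: "\<And>z. (f has_derivative (\<lambda>d. g z \<bullet> d)) (at z)"
    and cvx: "convex_on UNIV f"
  shows "f y + g y \<bullet> (z - y) \<le> f z"
proof -
  define h where "h t = f (y + t *\<^sub>R (z - y))" for t
  have c: "convex_on UNIV h"
    unfolding h_def
    apply (intro convex_onI)
    subgoal for t x1 x2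
    proof -
      assume tu: "0 < t" "t < 1"
      have "y + ((1 - t) * x1 + t * x2) *\<^sub>R (z - y) = (1 - t) *\<^sub>R (y + x1 *\<^sub>R (z - y)) + t *\<^sub>R (y + x2 *\<^sub>R (z - y))"
        by (simp add: algebra_simps)
      then show ?thesis
        using convex_onD[OF cvx, of t] tu by simp
    qed
    by simp
  have d: "(h has_real_derivative (g y \<bullet> (z - y))) (at 0 within UNIV)"
    unfolding h_def using line_deriv[OF grad, of y "z - y" 0] by simp
  have "h 1 - h 0 \<ge> (g y \<bullet> (z - y)) * (1 - 0)"
    using convex_on_imp_above_tangent[OF c _ _ _ d, of 1] by auto
  then show ?thesis unfolding h_def by simp
qed

lemma lin_diff:
  "lin_model f g a y k z - lin_model f g a y k w = (\<Sum>i<k. a (Suc i) *\<^sub>R g (y i)) \<bullet> (z - w)"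
  unfolding lin_model_def
  by (simp add: sum_subtractf[symmetric] inner_sum_left inner_diff_right algebra_simps)

lemma psi_quad:
  assumes min: "\<And>z. psi x0 f g a y k v \<le> psi x0 f g a y k z"
  shows "psi x0 f g a y k z = psi x0 f g a y k v + 1/2 * (norm (z - v))^2"
proof -
  define G where "G = (\<Sum>i<k. a (Suc i) *\<^sub>R g (y i))"
  have D: "psi x0 f g a y k z - psi x0 f g a y k w = 1/2 * (norm (z - x0))^2 - 1/2 * (norm (w - x0))^2 + G \<bullet> (z - w)" for z w
    unfolding psi_def using lin_diff[of f g a y k z w] G_def by simp
  define w where "w = v - x0 + G"
  have "0 \<le> psi x0 f g a y k (v - w) - psi x0 f g a y k v" using min[of "v - w"] by simp
  also have "\<dots> = 1/2 * (norm (v - w - x0))^2 - 1/2 * (norm (v - x0))^2 - G \<bullet> w"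
    using D[of "v - w" v] by simp
  also have "\<dots> = - 1/2 * (norm w)^2"
    unfolding w_def power2_norm_eq_inner
    by (simp add: inner_diff_left inner_diff_right inner_add_left inner_add_right inner_commute algebra_simps)
  finally have "w = 0" by simp
  then have G: "G = x0 - v" unfolding w_def by (simp add: algebra_simps)
  have "psi x0 f g a y k z - psi x0 f g a y k v = 1/2 * (norm (z - x0))^2 - 1/2 * (norm (v - x0))^2 + (x0 - v) \<bullet> (z - v)"
    using D[of z v] G by simp
  also have "\<dots> = 1/2 * (norm (z - v))^2"
    unfolding power2_norm_eq_inner
    by (simp add: inner_diff_left inner_diff_right inner_commute algebra_simps)
  finally show ?thesis by simp
qed

lemma psi_Suc:
  "psi x0 f g a y (Suc k) z = psi x0 f g a y k z + a (Suc k) * (f (y k) + g (y k) \<bullet> (z - y k))"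
  unfolding psi_def lin_model_def by simp

lemma linesearch:
  fixes f :: "'a::euclidean_space \<Rightarrow> real"
  assumes grad: "\<And>z. (f has_derivative (\<lambda>d. g z \<bullet> d)) (at z)"
    and b: "beta \<in> {0..1}"
    and min: "\<forall>c\<in>{0..1}. f (v + beta *\<^sub>R (x - v)) \<le> f (v + c *\<^sub>R (x - v))"
    and yd: "y = v + beta *\<^sub>R (x - v)"
  shows "g y \<bullet> (x - y) \<ge> 0" "g y \<bullet> (v - y) \<ge> 0"
proof -
  define l where "l = g y \<bullet> (x - v)"
  define p where "p t = f (v + t *\<^sub>R (x - v))" for t
  have D: "DERIV p beta :> l" unfolding p_def l_def yd by (rule line_deriv[OF grad])
  have l1: "l \<ge> 0" if "beta < 1"
  proof (rule ccontr)
    assume "\<not> l \<ge> 0"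
    then obtain d where d: "d > 0" "\<forall>h>0. h < d \<longrightarrow> p beta > p (beta + h)"
      using DERIV_neg_dec_right[OF D] by force
    define h where "h = min (d/2) ((1 - beta)/2)"
    have "h > 0" "h < d" using d that unfolding h_def by auto
    then have "p beta > p (beta + h)" using d by auto
    moreover have "beta + h \<in> {0..1}" using b that \<open>h>0\<close> unfolding h_def by (auto simp: min_def field_simps)
    then have "p beta \<le> p (beta + h)" using min unfolding p_def by blast
    ultimately show False by linarith
  qed
  have l2: "l \<le> 0" if "beta > 0"
  proof (rule ccontr)
    assume "\<not> l \<le> 0"
    then obtain d where d: "d > 0" "\<forall>h>0. h < d \<longrightarrow> p (beta - h) < p beta"
      using DERIV_pos_inc_left[OF D] by force
    define h where "h = min (d/2) (beta/2)"
    have "h > 0" "h < d" using d that unfolding h_def by auto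
    then have "p beta > p (beta - h)" using d by auto
    moreover have "beta - h \<in> {0..1}" using b that \<open>h>0\<close> unfolding h_def by (auto simp: min_def field_simps)
    then have "p beta \<le> p (beta - h)" using min unfolding p_def by blast
    ultimately show False by linarith
  qed
  have e1: "x - y = (1 - beta) *\<^sub>R (x - v)" unfolding yd by (simp add: algebra_simps)
  have e2: "v - y = (- beta) *\<^sub>R (x - v)" unfolding yd by (simp add: algebra_simps)
  have "g y \<bullet> (x - y) = (1 - beta) * l" unfolding e1 l_def by simp
  moreover have "(1 - beta) * l \<ge> 0"
    using b l1 by (cases "beta < 1") auto
  ultimately show "g y \<bullet> (x - y) \<ge> 0" by simp
  have "g y \<bullet> (v - y) = (- beta) * l" unfolding e2 l_def by simp
  moreover have "(- beta) * l \<ge> 0"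
    using b l2 by (cases "beta > 0") (auto simp: mult_nonneg_nonpos)
  ultimately show "g y \<bullet> (v - y) \<ge> 0" by simp
qed

lemma step_ineq:
  fixes f :: "'a::euclidean_space \<Rightarrow> real"
  assumes L_pos: "L > 0"
    and grad: "\<And>z. (f has_derivative (\<lambda>d. g z \<bullet> d)) (at z)"
    and lip: "\<And>z w. norm (g z - g w) \<le> L * norm (z - w)"
    and alg: "agmsdr_opt_a f g L x0 x v y A a beta \<or> agmsdr_opt_b f g x0 x v y A a beta h"
    and nonzero: "g (y k) \<noteq> 0"
    and Ak: "A k \<ge> 0"
  shows "a (Suc k) > 0 \<and> A (Suc k) * f (x (Suc k)) \<le> A (Suc k) * f (y k) - (a (Suc k))^2 / 2 * (norm (g (y k)))^2"
proof -
  have com: "agmsdr_common f g x0 x v y A a beta" using alg unfolding agmsdr_opt_a_def agmsdr_opt_b_def by blast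
  then have AS: "A (Suc k) = A k + a (Suc k)" unfolding agmsdr_common_def by blast
  let ?G = "g (y k)"
  have desc: "f (y k - (1/L) *\<^sub>R ?G) \<le> f (y k) - (norm ?G)^2 / (2*L)"
  proof -
    have "f (y k + (- (1/L) *\<^sub>R ?G)) \<le> f (y k) + ?G \<bullet> (- (1/L) *\<^sub>R ?G) + L/2 * (norm (- (1/L) *\<^sub>R ?G))^2"
      by (rule descent[OF grad lip])
    also have "\<dots> = f (y k) - (norm ?G)^2 / (2*L)"
      using L_pos by (simp add: power2_norm_eq_inner[symmetric] power2_eq_square field_simps)
    finally show ?thesis by simp
  qed
  have Gpos: "(norm ?G)^2 > 0" using nonzero by simp
  show ?thesis
  proof (cases "agmsdr_opt_a f g L x0 x v y A a beta")
    case True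
    then have xs: "x (Suc k) = y k - (1 / L) *\<^sub>R ?G" and ap: "a (Suc k) > 0"
      and eq: "(a (Suc k))^2 / (A k + a (Suc k)) = 1 / L"
      unfolding agmsdr_opt_a_def by blast+
    have Ap: "A (Suc k) > 0" using AS Ak ap by simp
    have a2: "(a (Suc k))^2 = A (Suc k) / L" using eq Ap AS L_pos by (simp add: field_simps)
    have "A (Suc k) * f (x (Suc k)) \<le> A (Suc k) * (f (y k) - (norm ?G)^2 / (2*L))"
      using desc xs Ap by (simp add: mult_left_mono)
    also have "\<dots> = A (Suc k) * f (y k) - (a (Suc k))^2 / 2 * (norm ?G)^2"
      using a2 L_pos by (simp add: field_simps)
    finally show ?thesis using ap by simp
  next
    case False
    then have B: "agmsdr_opt_b f g x0 x v y A a beta h" using alg by blast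
    let ?u = "(1 / norm ?G) *\<^sub>R ?G"
    have ls: "\<forall>t\<ge>0. f (x (Suc k)) \<le> f (y k - t *\<^sub>R ?u)"
      and eq: "f (y k) - (a (Suc k))^2 / (2 * (A k + a (Suc k))) * (norm ?G)^2 = f (x (Suc k))"
      and largest: "\<forall>a'. f (y k) - a'^2 / (2 * (A k + a')) * (norm ?G)^2 = f (x (Suc k)) \<longrightarrow> a' \<le> a (Suc k)"
      using B unfolding agmsdr_opt_b_def by auto
    have "(norm ?G / L) *\<^sub>R ?u = (1/L) *\<^sub>R ?G" using nonzero by simp
    moreover have "f (x (Suc k)) \<le> f (y k - (norm ?G / L) *\<^sub>R ?u)" using ls L_pos by (simp only: norm_ge_zero divide_nonneg_pos simp_thms)
    ultimately have "f (x (Suc k)) \<le> f (y k - (1/L) *\<^sub>R ?G)" by metis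
    with desc have fx: "f (x (Suc k)) \<le> f (y k) - (norm ?G)^2 / (2*L)" by simp
    define c where "c = (f (y k) - f (x (Suc k))) / (norm ?G)^2"
    have cpos: "c > 0" unfolding c_def using fx Gpos L_pos
      by (smt (verit) divide_pos_pos)
    define a' where "a' = c + sqrt (c^2 + 2*c*A k)"
    have s2: "(sqrt (c^2 + 2*c*A k))^2 = c^2 + 2*c*A k" using cpos Ak by simp
    have a'pos: "a' > 0" unfolding a'_def using cpos Ak by (intro add_pos_nonneg real_sqrt_ge_zero) auto
    have "a'^2 = 2*c*(A k + a')" unfolding a'_def using s2 by (simp add: power2_eq_square algebra_simps)
    then have "a'^2 / (2 * (A k + a')) = c" using a'pos Ak by (simp add: field_simps)
    then have "f (y k) - a'^2 / (2 * (A k + a')) * (norm ?G)^2 = f (x (Suc k))"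
      unfolding c_def using Gpos by simp
    then have ap: "a (Suc k) > 0" using largest a'pos by force
    have Ap: "A (Suc k) > 0" using AS Ak ap by simp
    have "A (Suc k) * f (x (Suc k)) = A (Suc k) * f (y k) - (a (Suc k))^2 / 2 * (norm ?G)^2"
      using eq[symmetric] Ap AS by (simp add: field_simps)
    then show ?thesis using ap by simp
  qed
qed

theorem mainTheorem5:
  fixes f :: "'a::euclidean_space \<Rightarrow> real" and g :: "'a \<Rightarrow> 'a" and L :: real
    and x0 xs :: 'a and x v y :: "nat \<Rightarrow> 'a" and A a beta h :: "nat \<Rightarrow> real" and k :: nat
  assumes L_pos: "L > 0"
    and grad: "\<And>z. (f has_derivative (\<lambda>d. g z \<bullet> d)) (at z)"
    and lip: "\<And>z w. norm (g z - g w) \<le> L * norm (z - w)"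
    and cvx: "convex_on UNIV f"
    and minimizer: "\<And>z. f xs \<le> f z"
    and alg: "agmsdr_opt_a f g L x0 x v y A a beta \<or> agmsdr_opt_b f g x0 x v y A a beta h"
    and nonzero: "\<And>i. g (y i) \<noteq> 0"
    and k: "k \<ge> 1"
  shows "(let R = norm (x0 - xs);
              fhat = (INF z\<in>cball x0 R. (1 / A k) * lin_model f g a y k z)
          in fhat \<le> f xs \<and> f (x k) - fhat \<le> R^2 / (2 * A k)
             \<and> f (x k) - f xs \<le> f (x k) - fhat)"
proof -
  have com: "agmsdr_common f g x0 x v y A a beta" using alg unfolding agmsdr_opt_a_def agmsdr_opt_b_def by blast
  have A0: "A 0 = 0" and v0: "v 0 = x0" and x0': "x 0 = x0" using com unfolding agmsdr_common_def by blast+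
  have C: "\<And>k. beta k \<in> {0..1} \<and>
          (\<forall>b\<in>{0..1}. f (v k + beta k *\<^sub>R (x k - v k)) \<le> f (v k + b *\<^sub>R (x k - v k))) \<and>
          y k = v k + beta k *\<^sub>R (x k - v k) \<and>
          A (Suc k) = A k + a (Suc k) \<and>
          (\<forall>z. psi x0 f g a y (Suc k) (v (Suc k)) \<le> psi x0 f g a y (Suc k) z)"
    using com unfolding agmsdr_common_def by blast
  have Anonneg: "A j \<ge> 0" for j
  proof (induction j)
    case 0 then show ?case using A0 by simp
  next
    case (Suc j)
    then show ?case using step_ineq[OF L_pos grad lip alg nonzero Suc] C[of j] by simp
  qed
  have apos: "a (Suc j) > 0" for j using step_ineq[OF L_pos grad lip alg nonzero Anonneg] by blast
  have sumA: "(\<Sum>i<j. a (Suc i)) = A j" for j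
  proof (induction j)
    case 0 then show ?case using A0 by simp
  next
    case (Suc j) then show ?case using C[of j] by simp
  qed
  have quad: "psi x0 f g a y j z = psi x0 f g a y j (v j) + 1/2 * (norm (z - v j))^2" for j z
  proof (cases j)
    case 0 then show ?thesis using v0 unfolding psi_def lin_model_def by simp
  next
    case (Suc i)
    have m: "\<And>z. psi x0 f g a y (Suc i) (v (Suc i)) \<le> psi x0 f g a y (Suc i) z" using C[of i] by blast
    show ?thesis unfolding Suc by (rule psi_quad[OF m])
  qed
  have key: "A j * f (x j) \<le> psi x0 f g a y j (v j)" for j
  proof (induction j)
    case 0 then show ?case using A0 v0 unfolding psi_def lin_model_def by simp
  next
    case (Suc j)
    define G where "G = g (y j)"
    define yy where "yy = y j"
    define d where "d = v (Suc j) - v j"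
    define aa where "aa = a (Suc j)"
    have ls1: "G \<bullet> (x j - yy) \<ge> 0" and ls2: "G \<bullet> (v j - yy) \<ge> 0"
      using linesearch[OF grad, of "beta j" "v j" "x j" "y j"] C[of j] unfolding G_def yy_def by auto
    have e: "psi x0 f g a y (Suc j) (v (Suc j)) = psi x0 f g a y j (v j) + 1/2 * (norm d)^2 + aa * (f yy + G \<bullet> (v j - yy)) + aa * (G \<bullet> d)"
      using psi_Suc[of x0 f g a y j "v (Suc j)"] quad[of j "v (Suc j)"]
      unfolding G_def yy_def d_def aa_def by (simp add: inner_diff_right algebra_simps)
    have t: "f yy + G \<bullet> (x j - yy) \<le> f (x j)" unfolding G_def yy_def by (rule tangent[OF grad cvx])
    have "A j * f yy \<le> A j * f (x j)"
    proof -
      have "A j * f yy \<le> A j * (f yy + G \<bullet> (x j - yy))" using ls1 Anonneg[of j] by (simp add: mult_left_mono)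
      also have "\<dots> \<le> A j * f (x j)" using t Anonneg[of j] by (simp add: mult_left_mono)
      finally show ?thesis .
    qed
    moreover have "aa * (G \<bullet> (v j - yy)) \<ge> 0" using ls2 apos[of j] unfolding aa_def by simp
    moreover have "1/2 * (norm d)^2 + aa * (G \<bullet> d) \<ge> -(aa^2/2 * (norm G)^2)"
    proof -
      have "0 \<le> (norm (d + aa *\<^sub>R G))^2" by simp
      also have "\<dots> = (norm d)^2 + 2 * aa * (G \<bullet> d) + aa^2 * (norm G)^2"
        unfolding power2_norm_eq_inner by (simp add: inner_add_left inner_add_right inner_commute power2_eq_square algebra_simps)
      finally show ?thesis by simp
    qed
    moreover have "A (Suc j) * f (x (Suc j)) \<le> A (Suc j) * f yy - aa^2/2 * (norm G)^2"
      using step_ineq[OF L_pos grad lip alg nonzero Anonneg[of j]] unfolding aa_def G_def yy_def by blast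
    moreover have "A (Suc j) = A j + aa" using C[of j] unfolding aa_def by simp
    ultimately show ?case using Suc.IH e by (simp add: algebra_simps)
  qed
  define R where "R = norm (x0 - xs)"
  define F where "F = (\<lambda>z. (1 / A k) * lin_model f g a y k z)"
  have Ak: "A k > 0"
  proof -
    obtain i where i: "k = Suc i" using k by (cases k) auto
    show ?thesis using apos[of i] C[of i] Anonneg[of i] unfolding i by simp
  qed
  have lower: "f (x k) - R^2 / (2 * A k) \<le> F z" if z: "z \<in> cball x0 R" for z
  proof -
    have "norm (z - x0) \<le> R" using z by (simp add: dist_norm norm_minus_commute)
    then have nz: "(norm (z - x0))^2 \<le> R^2" by (simp add: power_mono)
    have "A k * f (x k) \<le> psi x0 f g a y k z" using key[of k] quad[of k z] zero_le_power2[of "norm (z - v k)"] by linarith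
    also have "\<dots> \<le> R^2 / 2 + lin_model f g a y k z" unfolding psi_def using nz by simp
    finally have "A k * f (x k) - R^2/2 \<le> lin_model f g a y k z" by simp
    then have "(A k * f (x k) - R^2/2) / A k \<le> lin_model f g a y k z / A k"
      using Ak by (simp add: divide_right_mono)
    moreover have "(A k * f (x k) - R^2/2) / A k = f (x k) - R^2 / (2 * A k)"
      using Ak by (simp add: field_simps)
    ultimately show ?thesis unfolding F_def by simp
  qed
  have xsin: "xs \<in> cball x0 R" unfolding R_def by (simp add: dist_norm)
  have bdd: "bdd_below (F ` cball x0 R)" using lower by (intro bdd_belowI2) 
  have "lin_model f g a y k xs \<le> (\<Sum>i<k. a (Suc i) * f xs)"
    unfolding lin_model_def
    by (intro sum_mono mult_left_mono tangent[OF grad cvx]) (use apos in \<open>auto simp: less_imp_le\<close>)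
  also have "\<dots> = A k * f xs" using sumA[of k] by (simp add: sum_distrib_right[symmetric])
  finally have Fxs: "F xs \<le> f xs" unfolding F_def using Ak by (simp add: field_simps)
  have h1: "(INF z\<in>cball x0 R. F z) \<le> f xs"
    using cINF_lower[OF bdd xsin] Fxs by linarith
  have h2: "f (x k) - R^2 / (2 * A k) \<le> (INF z\<in>cball x0 R. F z)"
    using lower by (intro cINF_greatest) (auto simp: R_def)
  show ?thesis unfolding Let_def using h1 h2 unfolding F_def R_def by simp
qed

end
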